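(* Let $\varphi\colon\partial\mathbb{D}\to\partial\mathbb{D}$ be a bi-Lipschitz homeomorphism fixing $1,i,-1,-i$, written $\varphi(e^{i\theta})=e^{i\varphi(\theta)}$, where $\theta\mapsto\varphi(\theta)$ is the increasing continuous lift with $\varphi(0)=0$. For $t\in[0,1]$ let $\varphi_t(\theta)=(1-t)\theta+t\varphi(\theta)$ and define $\overline{\varphi}\colon\overline{\mathbb{D}}\times[0,1]\to\overline{\mathbb{D}}\times[0,1]$ by $\overline{\varphi}(re^{i\theta},t)=(re^{i\varphi_t(\theta)},t)$. Then $\overline{\varphi}$ is bi-Lipschitz.
   Context: $\mathbb{D}=\{z\in\mathbb{C}:|z|<1\}$ is the unit disk. *)

theory Defs
  imports "HOL-Analysis.Analysis"
begin

definition bi_lipschitz_on :: "'a::metric_space set \<Rightarrow> ('a \<Rightarrow> 'b::metric_space) \<Rightarrow> bool" where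
  "bi_lipschitz_on S f \<longleftrightarrow>
     (\<exists>C. lipschitz_on C S f \<and> (\<forall>x\<in>S. \<forall>y\<in>S. dist x y \<le> C * dist (f x) (f y)))"

definition lift_interp :: "(real \<Rightarrow> real) \<Rightarrow> real \<Rightarrow> real \<Rightarrow> real" where
  "lift_interp L t \<theta> = (1 - t) * \<theta> + t * L \<theta>"

text \<open>The angle is taken as Arg z; the value is independent of the choice of angle since
  the lift satisfies L(theta + 2 pi) = L theta + 2 pi, and irrelevant at z = 0.\<close>
definition phibar :: "(real \<Rightarrow> real) \<Rightarrow> complex \<times> real \<Rightarrow> complex \<times> real" where
  "phibar L p = (rcis (cmod (fst p)) (lift_interp L (snd p) (Arg (fst p))), snd p)"

end

theory Submission
  imports Defs "HOL-Library.Real_Mod"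
begin


lemma sin_ge_third:
  fixes x :: real assumes "0 \<le> x" "x \<le> pi/2" shows "x/3 \<le> sin x"
proof (cases "x \<le> pi/3")
  case True
  let ?f = "\<lambda>x. sin x - x/3"
  have "?f 0 \<le> ?f x"
  proof (rule DERIV_nonneg_imp_nondecreasing[OF assms(1)])
    fix u assume u: "0 \<le> u" "u \<le> x"
    have "cos (pi/3) \<le> cos u" using u True by (intro cos_monotone_0_pi_le) auto
    hence "cos u - 1/3 \<ge> 0" by (simp add: cos_60)
    moreover have "(?f has_real_derivative cos u - 1/3) (at u)"
      by (auto intro!: derivative_eq_intros)
    ultimately show "\<exists>y. (?f has_real_derivative y) (at u) \<and> 0 \<le> y" by blast
  qed
  thus ?thesis by simp
next
  case False
  have "sin (pi/3) \<le> sin x" using False assms by (intro sin_monotone_2pi_le) auto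
  moreover have "sqrt 3 \<ge> 4/3" by (rule real_le_rsqrt) (simp add: power2_eq_square)
  moreover have "x \<le> 2" using assms pi_less_4 by linarith
  ultimately show ?thesis by (simp add: sin_60)
qed

lemma chord: "cmod (cis x - cis y) = 2 * \<bar>sin ((x - y)/2)\<bar>"
proof -
  have "cis x - cis y = cis y * (cis (x - y) - 1)"
    by (simp add: algebra_simps cis_mult)
  hence e: "cmod (cis x - cis y) = cmod (cis (x - y) - 1)" by (simp add: norm_mult)
  define u where "u = (x - y)/2"
  have xy: "x - y = 2 * u" by (simp add: u_def)
  have "(cmod (cis (2*u) - 1))^2 = (cos (2*u) - 1)^2 + (sin (2*u))^2"
    by (simp add: cmod_power2)
  also have "\<dots> = 2 - 2 * cos (2*u)"
    using sin_cos_squared_add[of "2*u"] by (simp add: power2_eq_square algebra_simps)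
  also have "\<dots> = (2 * \<bar>sin u\<bar>)^2" by (simp add: cos_double_sin power_mult_distrib)
  finally have "cmod (cis (2*u) - 1) = 2 * \<bar>sin u\<bar>"
    using power2_eq_iff_nonneg[of "cmod (cis (2*u) - 1)" "2*\<bar>sin u\<bar>"] by simp
  hence "cmod (cis (x - y) - 1) = 2 * \<bar>sin u\<bar>" by (simp only: xy)
  thus ?thesis using e by (simp add: u_def)
qed

lemma chord_upper: "cmod (cis x - cis y) \<le> \<bar>x - y\<bar>"
  using abs_sin_x_le_abs_x[of "(x-y)/2"] by (simp add: chord)

lemma chord_lower_aux: assumes "0 \<le> x - y" "x - y \<le> pi" shows "(x - y)/3 \<le> cmod (cis x - cis y)"
proof -
  have "(x-y)/2/3 \<le> sin ((x-y)/2)" using assms by (intro sin_ge_third) auto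
  moreover have "0 \<le> sin ((x-y)/2)" using sin_ge_zero[of "(x-y)/2"] assms by auto
  ultimately show ?thesis by (simp add: chord)
qed

lemma chord_lower: assumes "\<bar>x - y\<bar> \<le> pi" shows "\<bar>x - y\<bar>/3 \<le> cmod (cis x - cis y)"
proof (cases "y \<le> x")
  case True thus ?thesis using chord_lower_aux[of x y] assms by auto
next
  case False thus ?thesis using chord_lower_aux[of y x] assms by (auto simp: norm_minus_commute)
qed

lemma chord_lower2: assumes "0 \<le> x - y" "x - y \<le> 2*pi"
  shows "min (x-y) (2*pi - (x-y))/3 \<le> cmod (cis x - cis y)"
proof (cases "x - y \<le> pi")
  case True thus ?thesis using chord_lower[of x y] assms by auto
next
  case False
  have "cmod (cis x - cis y) = cmod (cis (y + 2*pi) - cis x)"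
    by (metis cis_mult cis_2pi mult.right_neutral norm_minus_commute)
  also have "(2*pi - (x-y))/3 \<le> \<dots>" using chord_lower[of "y+2*pi" x] assms False
    by (simp add: abs_if)
  finally have "(2*pi - (x-y))/3 \<le> cmod (cis x - cis y)" .
  moreover have "min (x-y) (2*pi-(x-y))/3 \<le> (2*pi - (x-y))/3" by (intro divide_right_mono) simp_all
  ultimately show ?thesis by linarith
qed

lemma poly_id: fixes r q a b c d :: real shows
  "(r * a - q * b)^2 + (r * c - q * d)^2 - ((r - q)^2 + r * q * ((a - b)^2 + (c - d)^2))
      = (r^2 - r*q) * (c^2 + a^2 - 1) + (q^2 - r*q) * (d^2 + b^2 - 1)"
  by (simp add: power2_eq_square algebra_simps)

lemma norm_scale_sq: "(cmod (of_real r * cis x - of_real \<rho> * cis y))^2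
   = (r - \<rho>)^2 + r * \<rho> * (cmod (cis x - cis y))^2"
proof -
  have A: "(cmod (of_real r * cis x - of_real \<rho> * cis y))^2 =
     (r * cos x - \<rho> * cos y)^2 + (r * sin x - \<rho> * sin y)^2" by (simp add: cmod_power2)
  have B: "(cmod (cis x - cis y))^2 = (cos x - cos y)^2 + (sin x - sin y)^2"
    by (simp add: cmod_power2)
  have C: "(r * cos x - \<rho> * cos y)^2 + (r * sin x - \<rho> * sin y)^2 - ((r - \<rho>)^2 + r * \<rho> * ((cos x - cos y)^2 + (sin x - sin y)^2))
      = (r^2 - r*\<rho>) * ((sin x)^2 + (cos x)^2 - 1) + (\<rho>^2 - r*\<rho>) * ((sin y)^2 + (cos y)^2 - 1)"
    by (rule poly_id)
  have s1: "(sin x)^2 + (cos x)^2 = 1" and s2: "(sin y)^2 + (cos y)^2 = 1" by simp_all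
  show ?thesis using C unfolding A B s1 s2 by simp
qed

lemma norm_scale:
  assumes "0 \<le> r" "0 \<le> \<rho>" "1 \<le> K" "cmod (cis x' - cis y') \<le> K * cmod (cis x - cis y)"
  shows "cmod (of_real r * cis x' - of_real \<rho> * cis y') \<le> K * cmod (of_real r * cis x - of_real \<rho> * cis y)"
proof (rule power2_le_imp_le)
  define X' where "X' = (cmod (cis x' - cis y'))^2"
  define X where "X = (cmod (cis x - cis y))^2"
  have "(cmod (cis x' - cis y'))^2 \<le> (K * cmod (cis x - cis y))^2"
    using assms(4) by (intro power_mono) auto
  hence X: "X' \<le> K^2 * X" unfolding X_def X'_def by (simp add: power_mult_distrib)
  have "r * \<rho> * X' \<le> r * \<rho> * (K^2 * X)"
    using X assms(1,2) by (intro mult_left_mono) auto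
  hence a: "r * \<rho> * X' \<le> K^2 * (r * \<rho> * X)" by (simp add: ac_simps)
  have K2: "1 \<le> K^2" using assms(3) by (simp add: one_le_power)
  have b: "(r - \<rho>)^2 \<le> K^2 * (r-\<rho>)^2"
    using mult_right_mono[OF K2, of "(r-\<rho>)^2"] by simp
  have "(cmod (of_real r * cis x' - of_real \<rho> * cis y'))^2 = (r - \<rho>)^2 + r * \<rho> * X'"
    unfolding X'_def by (rule norm_scale_sq)
  also have "\<dots> \<le> K^2 * ((r - \<rho>)^2 + r * \<rho> * X)" using a b by (simp add: distrib_left)
  also have "\<dots> = (K * cmod (of_real r * cis x - of_real \<rho> * cis y))^2"
    unfolding X_def power_mult_distrib norm_scale_sq by simp
  finally show "(cmod (of_real r * cis x' - of_real \<rho> * cis y'))^2 \<le> (K * cmod (of_real r * cis x - of_real \<rho> * cis y))^2" .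
  show "0 \<le> K * cmod (of_real r * cis x - of_real \<rho> * cis y)" using assms by simp
qed



lemma lift_periodic:
  fixes L :: "real \<Rightarrow> real"
  assumes up: "\<And>a b. cmod (cis (L a) - cis (L b)) \<le> C * cmod (cis a - cis b)"
    and lo: "\<And>a b. cmod (cis a - cis b) \<le> C * cmod (cis (L a) - cis (L b))"
    and cont: "continuous_on UNIV L" and mono: "strict_mono L"
  shows "L (\<theta> + 2*pi) = L \<theta> + 2*pi"
proof -
  have inj: "cis a = cis b" if "cis (L a) = cis (L b)" for a b
    using lo[of a b] that by simp
  have c2: "cis (x + 2*pi) = cis x" for x by (simp flip: cis_mult)
  have "cis (L (\<theta> + 2*pi)) = cis (L \<theta>)"
    using up[of "\<theta> + 2*pi" \<theta>] by (simp add: c2)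
  hence "cis (L (\<theta> + 2*pi) - L \<theta>) = 1" by (simp flip: cis_divide)
  then obtain n where n: "L (\<theta> + 2*pi) - L \<theta> = of_int n * (2*pi)"
    using cis_eq_1_iff by blast
  have "L \<theta> < L (\<theta> + 2*pi)" using mono by (simp add: strict_mono_def)
  hence "0 < L (\<theta> + 2*pi) - L \<theta>" by simp
  hence "0 < of_int n * (2*pi)" by (simp only: n)
  hence n1: "n \<ge> 1" by (simp add: zero_less_mult_iff)
  have "n = 1"
  proof (rule ccontr)
    assume "n \<noteq> 1"
    hence n2: "n \<ge> 2" using n1 by simp
    hence "(2::real) * (2*pi) \<le> of_int n * (2*pi)"
      by (intro mult_right_mono) auto
    hence le: "L \<theta> + 2*pi \<le> L (\<theta> + 2*pi)" using n pi_gt_zero by linarith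
    obtain x where x: "\<theta> \<le> x" "x \<le> \<theta> + 2*pi" "L x = L \<theta> + 2*pi"
      using IVT'[of L \<theta> "L \<theta> + 2*pi" "\<theta> + 2*pi"] le continuous_on_subset[OF cont]
      by auto
    have "cis (L x) = cis (L \<theta>)" using x(3) c2 by simp
    hence "cis x = cis \<theta>" by (rule inj)
    hence "cis (x - \<theta>) = 1" by (simp flip: cis_divide)
    then obtain m where m: "x - \<theta> = of_int m * (2*pi)" using cis_eq_1_iff by blast
    have "x \<noteq> \<theta>" using x(3) by auto
    moreover have "x \<noteq> \<theta> + 2*pi"
    proof
      assume "x = \<theta> + 2*pi"
      hence "of_int n * (2*pi) = 1 * (2*pi)" using x(3) n by simp
      hence "n = 1" by (subst (asm) mult_cancel_right) auto
      thus False using n2 by simp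
    qed
    ultimately have h: "0 < x - \<theta>" "x - \<theta> < 2*pi" using x by auto
    have "0 < m"
    proof (rule ccontr)
      assume "\<not> 0 < m" hence "real_of_int m \<le> 0" by simp
      hence "real_of_int m * (2*pi) \<le> 0" by (simp add: mult_nonpos_nonneg)
      thus False using h m by linarith
    qed
    moreover have "m < 1"
    proof (rule ccontr)
      assume "\<not> m < 1" hence "1 \<le> real_of_int m" by simp
      hence "1 * (2*pi) \<le> real_of_int m * (2*pi)" by (intro mult_right_mono) auto
      thus False using h m by linarith
    qed
    ultimately show False by simp
  qed
  thus ?thesis using n by simp
qed

lemma div3: "(x::real)/3 \<le> y \<Longrightarrow> x \<le> 3*y" by linarith

lemma circ_est:
  fixes L :: "real \<Rightarrow> real"
  assumes per: "\<And>\<theta>. L (\<theta> + 2*pi) = L \<theta> + 2*pi"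
    and Llo: "\<And>a b. b \<le> a \<Longrightarrow> a \<le> b + pi \<Longrightarrow> c*(a-b) \<le> L a - L b"
    and Lup: "\<And>a b. b \<le> a \<Longrightarrow> a \<le> b + pi \<Longrightarrow> L a - L b \<le> Kq*(a-b)"
    and c: "0 < c" and Kqp: "0 \<le> Kq" and mono: "mono L"
    and t: "0 \<le> t" "t \<le> 1"
    and ab: "b \<le> a" "a \<le> b + pi"
  shows "cmod (cis (lift_interp L t a) - cis (lift_interp L t b)) \<le> 3*(1+Kq) * cmod (cis a - cis b)"
    and "cmod (cis a - cis b) \<le> (3/min 1 c) * cmod (cis (lift_interp L t a) - cis (lift_interp L t b))"
proof -
  define e where "e = a - b"
  define d where "d = L a - L b"
  define D where "D = lift_interp L t a - lift_interp L t b"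
  define m where "m = min 1 c"
  have m: "0 < m" "m \<le> 1" "m \<le> c" using c by (auto simp: m_def)
  have e: "0 \<le> e" "e \<le> pi" using ab by (auto simp: e_def)
  have D: "D = (1-t)*e + t*d" by (simp add: D_def e_def d_def lift_interp_def algebra_simps)
  have dlo: "c*e \<le> d" using Llo[OF ab] by (simp add: e_def d_def)
  have dup: "d \<le> Kq*e" using Lup[OF ab] by (simp add: e_def d_def)
  have ech: "e \<le> 3 * cmod (cis a - cis b)" using chord_lower[of a b] e by (simp add: e_def)
  have "(1-t)*e + t*d \<le> (1-t)*e + t*(Kq*e)" using dup t by (intro add_left_mono mult_left_mono) auto
  also have "\<dots> \<le> 1*e + 1*(Kq*e)" using t e Kqp
    by (intro add_mono mult_right_mono) auto
  finally have Dup: "D \<le> (1+Kq)*e" using D by (simp add: algebra_simps)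
  have me1: "m*e \<le> e" using m e by (simp add: mult_left_le_one_le)
  have "m*e \<le> c*e" using m e by (intro mult_right_mono) auto
  hence me2: "m*e \<le> d" using dlo by linarith
  have "(1-t)*(m*e) + t*(m*e) \<le> (1-t)*e + t*d"
    using t me1 me2 by (intro add_mono mult_left_mono) auto
  hence Dlo: "m*e \<le> D" using D by (simp add: algebra_simps)
  have "L (a + pi) \<le> L (b + 2*pi)" using ab by (intro monoD[OF mono]) auto
  moreover have "c*pi \<le> L (a+pi) - L a" using Llo[of a "a+pi"] by simp
  ultimately have gap: "c*pi \<le> 2*pi - d" using per[of b] by (simp add: d_def)
  have mp0: "m*pi \<le> pi" using m by (simp add: mult_left_le_one_le)
  have mp1: "m*pi \<le> 2*pi - e" using mp0 e by linarith
  have "m*pi \<le> c*pi" using m by (intro mult_right_mono) auto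
  hence mp2: "m*pi \<le> 2*pi - d" using gap by linarith
  have "2*pi - D = (1-t)*(2*pi - e) + t*(2*pi - d)" using D by (simp add: algebra_simps)
  also have "(1-t)*(m*pi) + t*(m*pi) \<le> (1-t)*(2*pi - e) + t*(2*pi - d)"
    using t mp1 mp2 by (intro add_mono mult_left_mono) auto
  finally have "m*pi \<le> 2*pi - D" by (simp add: algebra_simps)
  moreover have "m*e \<le> m*pi" using m e by (intro mult_left_mono) auto
  ultimately have D2: "m*e \<le> 2*pi - D" by linarith
  have "0 \<le> m*e" using m e by simp
  hence D0: "0 \<le> D" "D \<le> 2*pi" using Dlo D2 by linarith+
  have "m*e \<le> min D (2*pi - D)" using Dlo D2 by simp
  also have "min D (2*pi - D)/3 \<le> cmod (cis (lift_interp L t a) - cis (lift_interp L t b))"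
    using chord_lower2[of "lift_interp L t a" "lift_interp L t b"] D0 unfolding D_def by simp
  hence "min D (2*pi - D) \<le> 3 * cmod (cis (lift_interp L t a) - cis (lift_interp L t b))" by (rule div3)
  finally have "m*e \<le> 3 * cmod (cis (lift_interp L t a) - cis (lift_interp L t b))" .
  hence "e \<le> (3/m) * cmod (cis (lift_interp L t a) - cis (lift_interp L t b))"
    using m by (simp add: field_simps)
  moreover have "cmod (cis a - cis b) \<le> e" using chord_upper[of a b] e by (simp add: e_def)
  ultimately show "cmod (cis a - cis b) \<le> (3/min 1 c) * cmod (cis (lift_interp L t a) - cis (lift_interp L t b))"
    unfolding m_def by linarith
  have "cmod (cis (lift_interp L t a) - cis (lift_interp L t b)) \<le> \<bar>D\<bar>"
    using chord_upper unfolding D_def by blast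
  also have "\<dots> \<le> (1+Kq)*e" using Dup D0 by simp
  also have "\<dots> \<le> (1+Kq)*(3 * cmod (cis a - cis b))" using ech Kqp by (intro mult_left_mono) auto
  finally show "cmod (cis (lift_interp L t a) - cis (lift_interp L t b)) \<le> 3*(1+Kq) * cmod (cis a - cis b)"
    by (simp add: algebra_simps)
qed



lemma circ_gen_aux:
  fixes L :: "real \<Rightarrow> real"
  assumes per: "\<And>\<theta>. L (\<theta> + 2*pi) = L \<theta> + 2*pi"
    and Llo: "\<And>a b. b \<le> a \<Longrightarrow> a \<le> b + pi \<Longrightarrow> c*(a-b) \<le> L a - L b"
    and Lup: "\<And>a b. b \<le> a \<Longrightarrow> a \<le> b + pi \<Longrightarrow> L a - L b \<le> Kq*(a-b)"
    and c: "0 < c" and Kq: "0 \<le> Kq" and mono: "mono L"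
    and t: "0 \<le> t" "t \<le> 1"
    and ab: "b \<le> a" "a \<le> b + 2*pi"
    and K: "K = 3*(1+Kq) + 3/min 1 c"
  shows "cmod (cis (lift_interp L t a) - cis (lift_interp L t b)) \<le> K * cmod (cis a - cis b)
     \<and> cmod (cis a - cis b) \<le> K * cmod (cis (lift_interp L t a) - cis (lift_interp L t b))"
proof -
  have K1: "3*(1+Kq) \<le> K" "3/min 1 c \<le> K" using K Kq c by auto
  have gen: "cmod (cis (lift_interp L t a') - cis (lift_interp L t b')) \<le> K * cmod (cis a' - cis b')
     \<and> cmod (cis a' - cis b') \<le> K * cmod (cis (lift_interp L t a') - cis (lift_interp L t b'))"
    if "b' \<le> a'" "a' \<le> b' + pi" for a' b'
  proof
    show "cmod (cis (lift_interp L t a') - cis (lift_interp L t b')) \<le> K * cmod (cis a' - cis b')"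
    proof -
      have "cmod (cis (lift_interp L t a') - cis (lift_interp L t b')) \<le> 3*(1+Kq) * cmod (cis a' - cis b')"
        by (rule circ_est(1)[where c=c]) (fact per Llo Lup c Kq mono t that)+
      thus ?thesis using K1(1) by (meson mult_right_mono norm_ge_zero order_trans)
    qed
    show "cmod (cis a' - cis b') \<le> K * cmod (cis (lift_interp L t a') - cis (lift_interp L t b'))"
    proof -
      have "cmod (cis a' - cis b') \<le> 3/min 1 c * cmod (cis (lift_interp L t a') - cis (lift_interp L t b'))"
        by (rule circ_est(2)[where c=c and Kq=Kq]) (fact per Llo Lup c Kq mono t that)+
      thus ?thesis using K1(2) by (meson mult_right_mono norm_ge_zero order_trans)
    qed
  qed
  show ?thesis
  proof (cases "a \<le> b + pi")
    case True thus ?thesis using gen ab by blast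
  next
    case False
    have c2: "cis (x + 2*pi) = cis x" for x by (simp flip: cis_mult)
    have P: "lift_interp L t (b + 2*pi) = lift_interp L t b + 2*pi"
      by (simp add: lift_interp_def per) (simp add: algebra_simps)
    have "cmod (cis (lift_interp L t (b+2*pi)) - cis (lift_interp L t a)) \<le> K * cmod (cis (b+2*pi) - cis a)
     \<and> cmod (cis (b+2*pi) - cis a) \<le> K * cmod (cis (lift_interp L t (b+2*pi)) - cis (lift_interp L t a))"
      using False ab by (intro gen) auto
    thus ?thesis unfolding P c2 by (simp add: norm_minus_commute)
  qed
qed

lemma circ_gen:
  fixes L :: "real \<Rightarrow> real"
  assumes per: "\<And>\<theta>. L (\<theta> + 2*pi) = L \<theta> + 2*pi"
    and Llo: "\<And>a b. b \<le> a \<Longrightarrow> a \<le> b + pi \<Longrightarrow> c*(a-b) \<le> L a - L b"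
    and Lup: "\<And>a b. b \<le> a \<Longrightarrow> a \<le> b + pi \<Longrightarrow> L a - L b \<le> Kq*(a-b)"
    and c: "0 < c" and Kq: "0 \<le> Kq" and mono: "mono L"
    and t: "0 \<le> t" "t \<le> 1"
    and ab: "\<bar>a - b\<bar> \<le> 2*pi"
    and K: "K = 3*(1+Kq) + 3/min 1 c"
  shows "cmod (cis (lift_interp L t a) - cis (lift_interp L t b)) \<le> K * cmod (cis a - cis b)
     \<and> cmod (cis a - cis b) \<le> K * cmod (cis (lift_interp L t a) - cis (lift_interp L t b))"
proof (cases "b \<le> a")
  case True
  have "a \<le> b + 2*pi" using ab by auto
  show ?thesis by (rule circ_gen_aux[where c=c and Kq=Kq and K=K]) (fact per Llo Lup c Kq mono t True \<open>a \<le> b + 2*pi\<close> K)+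
next
  case False
  hence ba: "a \<le> b" "b \<le> a + 2*pi" using ab by auto
  have "cmod (cis (lift_interp L t b) - cis (lift_interp L t a)) \<le> K * cmod (cis b - cis a)
     \<and> cmod (cis b - cis a) \<le> K * cmod (cis (lift_interp L t b) - cis (lift_interp L t a))"
    by (rule circ_gen_aux[where c=c and Kq=Kq and K=K]) (fact per Llo Lup c Kq mono t ba K)+
  thus ?thesis by (simp add: norm_minus_commute)
qed

lemma time_est:
  "cmod (cis (lift_interp L t a) - cis (lift_interp L s a)) \<le> \<bar>L a - a\<bar> * \<bar>t - s\<bar>"
proof -
  have "lift_interp L t a - lift_interp L s a = (L a - a) * (t - s)"
    by (simp add: lift_interp_def algebra_simps)
  thus ?thesis using chord_upper[of "lift_interp L t a" "lift_interp L s a"] by (simp add: abs_mult)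
qed



lemma core:
  fixes L :: "real \<Rightarrow> real"
  assumes K1: "1 \<le> K" and M0: "0 \<le> M"
    and circ: "\<And>a b t. -pi \<le> a \<Longrightarrow> a \<le> pi \<Longrightarrow> -pi \<le> b \<Longrightarrow> b \<le> pi \<Longrightarrow> 0 \<le> t \<Longrightarrow> t \<le> 1 \<Longrightarrow>
        cmod (cis (lift_interp L t a) - cis (lift_interp L t b)) \<le> K * cmod (cis a - cis b)
      \<and> cmod (cis a - cis b) \<le> K * cmod (cis (lift_interp L t a) - cis (lift_interp L t b))"
    and tb: "\<And>a t s. -pi \<le> a \<Longrightarrow> a \<le> pi \<Longrightarrow> cmod (cis (lift_interp L t a) - cis (lift_interp L s a)) \<le> M * \<bar>t - s\<bar>"
    and p: "p \<in> cball 0 1 \<times> {0..1}" and q: "q \<in> cball 0 1 \<times> {0..1}"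
  shows "dist (phibar L p) (phibar L q) \<le> (K + K*M + M + 1) * dist p q
       \<and> dist p q \<le> (K + K*M + M + 1) * dist (phibar L p) (phibar L q)"
proof -
  obtain z t where pz: "p = (z,t)" by (cases p)
  obtain w s where qw: "q = (w,s)" by (cases q)
  have zt: "cmod z \<le> 1" "0 \<le> t" "t \<le> 1" using p pz by auto
  have ws: "cmod w \<le> 1" "0 \<le> s" "s \<le> 1" using q qw by auto
  define r where "r = cmod z"
  define \<rho> where "\<rho> = cmod w"
  define a where "a = Arg z"
  define b where "b = Arg w"
  have r: "0 \<le> r" "0 \<le> \<rho>" "\<rho> \<le> 1" using ws by (auto simp: r_def \<rho>_def)
  have zr: "z = of_real r * cis a" using rcis_cmod_Arg[of z] by (simp add: rcis_def r_def a_def)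
  have wr: "w = of_real \<rho> * cis b" using rcis_cmod_Arg[of w] by (simp add: rcis_def \<rho>_def b_def)
  have ab: "-pi \<le> a" "a \<le> pi" "-pi \<le> b" "b \<le> pi"
    using Arg_bounded[of z] Arg_bounded[of w] by (auto simp: a_def b_def)
  have fp: "phibar L p = (of_real r * cis (lift_interp L t a), t)"
    by (simp add: phibar_def pz rcis_def r_def a_def)
  have fq: "phibar L q = (of_real \<rho> * cis (lift_interp L s b), s)"
    by (simp add: phibar_def qw rcis_def \<rho>_def b_def)
  define Z where "Z = cmod (z - w)"
  define T where "T = \<bar>t - s\<bar>"
  define X where "X = cmod (of_real r * cis (lift_interp L t a) - of_real \<rho> * cis (lift_interp L s b))"
  define Y where "Y = cmod (of_real r * cis (lift_interp L t a) - of_real \<rho> * cis (lift_interp L t b))"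
  have dpq: "dist p q = sqrt (Z^2 + T^2)"
    unfolding pz qw dist_Pair_Pair by (simp add: dist_norm Z_def T_def)
  have dfpq: "dist (phibar L p) (phibar L q) = sqrt (X^2 + T^2)"
    unfolding fp fq dist_Pair_Pair by (simp add: dist_norm X_def T_def)
  have nn: "0 \<le> Z" "0 \<le> T" "0 \<le> X" "0 \<le> Y" by (auto simp: Z_def T_def X_def Y_def)
  have Zd: "Z \<le> dist p q" and Td: "T \<le> dist p q" unfolding dpq by simp_all
  have Xf: "X \<le> dist (phibar L p) (phibar L q)" and Tf: "T \<le> dist (phibar L p) (phibar L q)"
    unfolding dfpq by simp_all
  have dpq_le: "dist p q \<le> Z + T" unfolding dpq using sqrt_sum_squares_le_sum_abs[of Z T] nn by simp
  have dfpq_le: "dist (phibar L p) (phibar L q) \<le> X + T"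
    unfolding dfpq using sqrt_sum_squares_le_sum_abs[of X T] nn by simp
  note cc = circ[OF ab zt(2,3)]
  have YZ: "Y \<le> K * Z" unfolding Y_def Z_def zr wr
    by (rule norm_scale[OF r(1,2) K1]) (use cc in blast)
  have ZY: "Z \<le> K * Y" unfolding Y_def Z_def zr wr
    by (rule norm_scale[OF r(1,2) K1]) (use cc in blast)
  have tb': "\<rho> * cmod (cis (lift_interp L t b) - cis (lift_interp L s b)) \<le> M * T"
  proof -
    have "\<rho> * cmod (cis (lift_interp L t b) - cis (lift_interp L s b)) \<le> cmod (cis (lift_interp L t b) - cis (lift_interp L s b))"
      using r by (simp add: mult_left_le_one_le)
    also have "\<dots> \<le> M * T" unfolding T_def by (rule tb[OF ab(3,4)])
    finally show ?thesis .
  qed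
  have eq1: "of_real r * cis (lift_interp L t a) - of_real \<rho> * cis (lift_interp L s b)
     = (of_real r * cis (lift_interp L t a) - of_real \<rho> * cis (lift_interp L t b))
       + of_real \<rho> * (cis (lift_interp L t b) - cis (lift_interp L s b))"
    by (simp add: algebra_simps)
  have XY: "X \<le> Y + M * T"
  proof -
    have "X \<le> Y + cmod (of_real \<rho> * (cis (lift_interp L t b) - cis (lift_interp L s b)))"
      unfolding X_def Y_def eq1 by (rule norm_triangle_ineq)
    thus ?thesis using tb' r by (simp add: norm_mult)
  qed
  have YX: "Y \<le> X + M * T"
  proof -
    have eq2: "of_real r * cis (lift_interp L t a) - of_real \<rho> * cis (lift_interp L t b)
       = (of_real r * cis (lift_interp L t a) - of_real \<rho> * cis (lift_interp L s b))
         - of_real \<rho> * (cis (lift_interp L t b) - cis (lift_interp L s b))"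
      by (simp add: algebra_simps)
    have "Y \<le> X + cmod (of_real \<rho> * (cis (lift_interp L t b) - cis (lift_interp L s b)))"
      unfolding X_def Y_def eq2 by (rule norm_triangle_ineq4)
    thus ?thesis using tb' r by (simp add: norm_mult)
  qed
  have KM: "0 \<le> K*M" using K1 M0 by simp
  define D where "D = dist p q"
  define F where "F = dist (phibar L p) (phibar L q)"
  have D0: "0 \<le> D" "0 \<le> F" by (simp_all add: D_def F_def)
  have "K * Z \<le> K * D" using Zd K1 by (intro mult_left_mono) (auto simp: D_def)
  moreover have "M * T \<le> M * D" using Td M0 by (intro mult_left_mono) (auto simp: D_def)
  moreover have "0 \<le> (K*M) * D" using KM D0 by simp
  ultimately have A: "F \<le> (K + K*M + M + 1) * D"
    using dfpq_le XY YZ Td unfolding F_def D_def by (simp add: algebra_simps)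
  have "K * X \<le> K * F" using Xf K1 by (intro mult_left_mono) (auto simp: F_def)
  moreover have "(K*M) * T \<le> (K*M) * F" using Tf KM by (intro mult_left_mono) (auto simp: F_def)
  moreover have "0 \<le> M * F" using M0 D0 by simp
  moreover have "K * Y \<le> K * (X + M*T)" using YX K1 by (intro mult_left_mono) auto
  ultimately have B: "D \<le> (K + K*M + M + 1) * F"
    using dpq_le ZY Tf unfolding F_def D_def by (simp add: algebra_simps)
  show ?thesis using A B by (simp add: D_def F_def)
qed



theorem lemma4p3:
  fixes \<phi> :: "complex \<Rightarrow> complex" and L :: "real \<Rightarrow> real"
  assumes homeo: "\<exists>\<psi>. homeomorphism (sphere 0 1) (sphere 0 1) \<phi> \<psi>"
    and bilip: "bi_lipschitz_on (sphere 0 1) \<phi>"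
    and fix1: "\<phi> 1 = 1" and fixi: "\<phi> \<i> = \<i>"
    and fixm1: "\<phi> (-1) = -1" and fixmi: "\<phi> (-\<i>) = -\<i>"
    and lift: "\<forall>\<theta>. \<phi> (cis \<theta>) = cis (L \<theta>)"
    and lift_cont: "continuous_on UNIV L"
    and lift_mono: "strict_mono L"
    and lift0: "L 0 = 0"
  shows "bi_lipschitz_on (cball 0 1 \<times> {0..1}) (phibar L)"
proof -
  obtain C where lipC: "lipschitz_on C (sphere 0 1) \<phi>"
    and loC: "\<forall>x\<in>sphere 0 1. \<forall>y\<in>sphere 0 1. dist x y \<le> C * dist (\<phi> x) (\<phi> y)"
    using bilip unfolding bi_lipschitz_on_def by blast
  have sph: "cis a \<in> sphere 0 1" for a by simp
  have up: "cmod (cis (L a) - cis (L b)) \<le> C * cmod (cis a - cis b)" for a b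
    using lipschitz_onD[OF lipC sph sph, of a b] lift by (simp add: dist_norm)
  have lo: "cmod (cis a - cis b) \<le> C * cmod (cis (L a) - cis (L b))" for a b
    using loC[rule_format, OF sph[of a] sph[of b]] lift by (simp add: dist_norm)
  have Cpos: "0 < C"
  proof (rule ccontr)
    assume "\<not> 0 < C"
    hence "C * cmod (cis (L 0) - cis (L pi)) \<le> 0" by (simp add: mult_nonpos_nonneg)
    moreover have "cmod (cis 0 - cis pi) = 2" by simp
    ultimately show False using lo[of 0 pi] by linarith
  qed
  have per: "L (\<theta> + 2*pi) = L \<theta> + 2*pi" for \<theta>
    by (rule lift_periodic[where C=C]) (fact up lo lift_cont lift_mono)+
  have mono: "mono L" using lift_mono by (rule strict_mono_mono)
  define c where "c = 1/(3*C)"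
  have c: "0 < c" using Cpos by (simp add: c_def)
  have Llo: "c*(a-b) \<le> L a - L b" if ab: "b \<le> a" "a \<le> b + pi" for a b
  proof -
    have "(a-b)/3 \<le> cmod (cis a - cis b)" using chord_lower[of a b] ab by simp
    also have "\<dots> \<le> C * cmod (cis (L a) - cis (L b))" by (rule lo)
    also have "\<dots> \<le> C * \<bar>L a - L b\<bar>" using Cpos chord_upper by (intro mult_left_mono) auto
    also have "\<bar>L a - L b\<bar> = L a - L b" using monoD[OF mono ab(1)] by simp
    finally have "(a-b)/3 \<le> C * (L a - L b)" .
    thus ?thesis using Cpos by (simp add: c_def field_simps)
  qed
  define Kq where "Kq = 3*C + 18*C^2"
  have Kq: "0 \<le> Kq" using Cpos by (simp add: Kq_def)
  have Lup: "L a - L b \<le> Kq*(a-b)" if ab: "b \<le> a" "a \<le> b + pi" for a b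
  proof -
    define d where "d = L a - L b"
    define e where "e = a - b"
    have d0: "0 \<le> d" using monoD[OF mono ab(1)] by (simp add: d_def)
    have e0: "0 \<le> e" using ab by (simp add: e_def)
    have "L (a + pi) \<le> L (b + 2*pi)" using ab by (intro monoD[OF mono]) auto
    moreover have "c*pi \<le> L (a+pi) - L a" using Llo[of a "a+pi"] by simp
    ultimately have gap: "c*pi \<le> 2*pi - d" using per[of b] by (simp add: d_def)
    have cp: "0 < c*pi" using c by simp
    have ch: "min d (2*pi - d)/3 \<le> C * e"
    proof -
      have "min d (2*pi - d)/3 \<le> cmod (cis (L a) - cis (L b))"
        using chord_lower2[of "L a" "L b"] d0 gap cp by (simp add: d_def)
      also have "\<dots> \<le> C * cmod (cis a - cis b)" by (rule up)
      also have "\<dots> \<le> C * e" using Cpos chord_upper[of a b] e0 by (intro mult_left_mono) (auto simp: e_def)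
      finally show ?thesis .
    qed
    have CC: "0 \<le> C*C" by simp
    show ?thesis
    proof (cases "d \<le> c*pi")
      case True
      hence "min d (2*pi - d) = d" using gap by simp
      hence "d \<le> 3*C*e" using ch by simp
      also have "\<dots> \<le> Kq * e" using e0 Cpos by (intro mult_right_mono) (auto simp: Kq_def)
      finally show ?thesis by (simp add: d_def e_def)
    next
      case False
      hence "c*pi \<le> min d (2*pi - d)" using gap by simp
      hence "c*pi/3 \<le> min d (2*pi - d)/3" by (rule divide_right_mono) simp
      hence "c*pi/3 \<le> C * e" using ch by (rule order_trans)
      hence "pi/(9*C) \<le> C*e" by (simp add: c_def)
      hence "pi \<le> 9*C*C*e" using Cpos by (simp add: field_simps)
      hence "d \<le> 18*C^2*e" using gap cp by (simp add: power2_eq_square)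
      also have "\<dots> \<le> Kq * e" using e0 Cpos by (intro mult_right_mono) (auto simp: Kq_def)
      finally show ?thesis by (simp add: d_def e_def)
    qed
  qed
  define K where "K = 3*(1+Kq) + 3/min 1 c"
  have K1: "1 \<le> K" using Kq c by (simp add: K_def)
  define M where "M = \<bar>L (-pi)\<bar> + \<bar>L pi\<bar> + pi"
  have M0: "0 \<le> M" by (simp add: M_def)
  have circ: "cmod (cis (lift_interp L t a) - cis (lift_interp L t b)) \<le> K * cmod (cis a - cis b)
      \<and> cmod (cis a - cis b) \<le> K * cmod (cis (lift_interp L t a) - cis (lift_interp L t b))"
    if "-pi \<le> a" "a \<le> pi" "-pi \<le> b" "b \<le> pi" "0 \<le> t" "t \<le> 1" for a b t
  proof -
    have ab: "\<bar>a - b\<bar> \<le> 2*pi" using that by auto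
    show ?thesis
      by (rule circ_gen[where c=c and Kq=Kq and K=K]) (fact per Llo Lup c Kq mono that ab K_def)+
  qed
  have tb: "cmod (cis (lift_interp L t a) - cis (lift_interp L s a)) \<le> M * \<bar>t - s\<bar>"
    if "-pi \<le> a" "a \<le> pi" for a t s
  proof -
    have "L (-pi) \<le> L a" "L a \<le> L pi" using that by (auto intro: monoD[OF mono])
    moreover have "-\<bar>L (-pi)\<bar> \<le> L (-pi)" "L pi \<le> \<bar>L pi\<bar>" by auto
    ultimately have "\<bar>L a - a\<bar> \<le> M" using that unfolding M_def abs_le_iff by linarith
    hence "\<bar>L a - a\<bar> * \<bar>t - s\<bar> \<le> M * \<bar>t - s\<bar>" by (intro mult_right_mono) auto
    thus ?thesis using time_est[of L t a s] by linarith
  qed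
  define Ct where "Ct = K + K*M + M + 1"
  have Ct: "0 \<le> Ct" using K1 M0 by (simp add: Ct_def)
  have cr: "dist (phibar L x) (phibar L y) \<le> Ct * dist x y \<and> dist x y \<le> Ct * dist (phibar L x) (phibar L y)"
    if "x \<in> cball 0 1 \<times> {0..1}" "y \<in> cball 0 1 \<times> {0..1}" for x y
    unfolding Ct_def by (rule core) (fact K1 M0 circ tb that)+
  show ?thesis unfolding bi_lipschitz_on_def
  proof (intro exI conjI lipschitz_onI ballI)
    show "dist (phibar L x) (phibar L y) \<le> Ct * dist x y"
      if "x \<in> cball 0 1 \<times> {0..1}" "y \<in> cball 0 1 \<times> {0..1}" for x y
      using cr[OF that] by simp
    show "dist x y \<le> Ct * dist (phibar L x) (phibar L y)"
      if "x \<in> cball 0 1 \<times> {0..1}" "y \<in> cball 0 1 \<times> {0..1}" for x y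
      using cr[OF that] by simp
  qed (fact Ct)
qed


end
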